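(* Let $a,b>0$, $c=a+b$, and $F(x)=F(a,b;c;x)$ for $|x|<1$. Then (1) $\log F(x)$ is convex on $(0,1)$; (2) $t\mapsto\log F(1-e^{-t})$ is concave on $(0,\infty)$; (3) $t\mapsto F(1-e^{-t})$ is convex on $(0,\infty)$. In particular, $$F\Big(\frac{x+y}{2}\Big)\le\sqrt{F(x)F(y)}\le F\big(1-\sqrt{(1-x)(1-y)}\big)\le\frac{F(x)+F(y)}{2}$$ for all $x,y\in(0,1)$, with equality if and only if $x=y$.
   Context: $F(a,b;c;x)=\sum_{n=0}^\infty\frac{(a,n)(b,n)}{(c,n)\,n!}x^n$ for $|x|<1$ is the Gaussian hypergeometric function, where $(a,0)=1$ and $(a,n)=a(a+1)\cdots(a+n-1)$ for $n\ge1$. *)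

theory Defs
  imports "HOL-Analysis.Analysis"
begin

definition hypergeom :: "real \<Rightarrow> real \<Rightarrow> real \<Rightarrow> real \<Rightarrow> real" where
  "hypergeom a b c x =
     (\<Sum>n. pochhammer a n * pochhammer b n / (pochhammer c n * fact n) * x ^ n)"

end

theory Submission
  imports Defs
begin



lemma partial_identity:
  fixes p q :: "nat \<Rightarrow> real"
  shows "(\<Sum>n<N. p n * y^n) * (\<Sum>n<N. q n * x^n) - (\<Sum>n<N. p n * x^n) * (\<Sum>n<N. q n * y^n)
       = (\<Sum>m<N. \<Sum>n<m. (p n * q m - p m * q n) * (y^n * x^m - x^n * y^m))"
proof (induction N)
  case 0
  then show ?case by simp
next
  case (Suc N)
  have eq: "\<And>n. (p n * q N - p N * q n) * (y^n * x^N - x^n * y^N) =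
     (q N * x^N) * (p n * y^n) - (q N * y^N) * (p n * x^n) - (p N * x^N) * (q n * y^n) + (p N * y^N) * (q n * x^n)"
    by (simp add: algebra_simps)
  have s: "(\<Sum>n<N. (p n * q N - p N * q n) * (y^n * x^N - x^n * y^N)) =
     (q N * x^N) * (\<Sum>n<N. p n * y^n) - (q N * y^N) * (\<Sum>n<N. p n * x^n) - (p N * x^N) * (\<Sum>n<N. q n * y^n) + (p N * y^N) * (\<Sum>n<N. q n * x^n)"
    unfolding eq by (simp add: sum.distrib sum_subtractf sum_distrib_left)
  show ?case using Suc.IH s by (simp add: algebra_simps)
qed

lemma ratio_bound:
  fixes p q :: "nat \<Rightarrow> real"
  assumes sp: "summable (\<lambda>n. p n * x^n)" "summable (\<lambda>n. p n * y^n)"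
    and sq: "summable (\<lambda>n. q n * x^n)" "summable (\<lambda>n. q n * y^n)"
    and xy: "0 < x" "x < y"
    and mono: "\<And>n m. n < m \<Longrightarrow> p m * q n \<le> p n * q m"
  shows "(\<Sum>n. p n * y^n) * (\<Sum>n. q n * x^n) - (\<Sum>n. p n * x^n) * (\<Sum>n. q n * y^n)
          \<le> (p 0 * q 1 - p 1 * q 0) * (x - y)"
proof -
  define t where "t n m = (p n * q m - p m * q n) * (y^n * x^m - x^n * y^m)" for n m
  have tneg: "t n m \<le> 0" if "n < m" for n m
  proof -
    have "x^(m-n) \<le> y^(m-n)" using xy by (intro power_mono) auto
    then have "x^n * y^n * x^(m-n) \<le> x^n * y^n * y^(m-n)"
      using xy by (intro mult_left_mono) auto
    moreover have "x^m = x^n * x^(m-n)" "y^m = y^n * y^(m-n)" using that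
      by (simp_all flip: power_add)
    ultimately have "y^n * x^m - x^n * y^m \<le> 0" by (simp add: algebra_simps)
    moreover have "p n * q m - p m * q n \<ge> 0" using mono[OF that] by simp
    ultimately show ?thesis unfolding t_def by (simp add: mult_nonneg_nonpos)
  qed
  have bound: "(\<Sum>m<N. \<Sum>n<m. t n m) \<le> t 0 1" if "N \<ge> 2" for N
  proof -
    have "1 \<in> {..<N}" using that by simp
    then have "(\<Sum>m<N. \<Sum>n<m. t n m) = (\<Sum>n<1. t n 1) + (\<Sum>m\<in>{..<N}-{1}. \<Sum>n<m. t n m)"
      by (simp add: sum.remove)
    moreover have "(\<Sum>m\<in>{..<N}-{1}. \<Sum>n<m. t n m) \<le> 0"
      using tneg by (intro sum_nonpos) (auto intro!: sum_nonpos)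
    ultimately show ?thesis by simp
  qed
  have lim: "(\<lambda>N. (\<Sum>n<N. p n * y^n) * (\<Sum>n<N. q n * x^n) - (\<Sum>n<N. p n * x^n) * (\<Sum>n<N. q n * y^n))
      \<longlonglongrightarrow> (\<Sum>n. p n * y^n) * (\<Sum>n. q n * x^n) - (\<Sum>n. p n * x^n) * (\<Sum>n. q n * y^n)"
    by (intro tendsto_intros summable_LIMSEQ sp sq)
  show ?thesis
  proof (rule LIMSEQ_le_const2[OF lim], intro exI allI impI)
    fix N :: nat assume "2 \<le> N"
    then show "(\<Sum>n<N. p n * y^n) * (\<Sum>n<N. q n * x^n) - (\<Sum>n<N. p n * x^n) * (\<Sum>n<N. q n * y^n)
          \<le> (p 0 * q 1 - p 1 * q 0) * (x - y)"
      unfolding partial_identity using bound[of N] by (simp add: t_def)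
  qed
qed

lemma strict_mid:
  fixes f f' :: "real \<Rightarrow> real"
  assumes der: "\<And>t. t \<in> I \<Longrightarrow> (f has_real_derivative f' t) (at t)"
    and mono: "\<And>s t. s \<in> I \<Longrightarrow> t \<in> I \<Longrightarrow> s < t \<Longrightarrow> f' s < f' t"
    and intv: "\<And>u v w. u \<in> I \<Longrightarrow> w \<in> I \<Longrightarrow> u \<le> v \<Longrightarrow> v \<le> w \<Longrightarrow> v \<in> I"
    and xy: "x \<in> I" "y \<in> I" "x < y"
  shows "2 * f ((x + y) / 2) < f x + f y"
proof -
  define m where "m = (x + y) / 2"
  have m: "x < m" "m < y" using xy by (auto simp: m_def)
  have inI: "t \<in> I" if "x \<le> t" "t \<le> y" for t using intv[OF xy(1) xy(2) that] .
  have derI: "DERIV f t :> f' t" if "x \<le> t" "t \<le> y" for t using der[OF inI[OF that]] .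
  obtain z1 where z1: "x < z1" "z1 < m" "f m - f x = (m - x) * f' z1"
    using MVT2[OF m(1), of f f'] derI m by force
  obtain z2 where z2: "m < z2" "z2 < y" "f y - f m = (y - m) * f' z2"
    using MVT2[OF m(2), of f f'] derI m by force
  have "z1 \<in> I" "z2 \<in> I" using inI z1 z2 m by auto
  then have "f' z1 < f' z2" using mono z1 z2 by simp
  moreover have "m - x = y - m" "m - x > 0" using m by (auto simp: m_def field_simps)
  ultimately have "f m - f x < f y - f m" using z1 z2 by (metis mult_strict_left_mono)
  then show ?thesis by (simp add: m_def)
qed

context
  fixes a b :: real
  assumes apos: "a > 0" and bpos: "b > 0"
begin

definition cA :: "nat \<Rightarrow> real" where
  "cA n = pochhammer a n * pochhammer b n / (pochhammer (a+b) n * fact n)"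

lemma cA_pos: "cA n > 0"
  using apos bpos unfolding cA_def by (intro divide_pos_pos mult_pos_pos pochhammer_pos) auto

lemma cA_0: "cA 0 = 1" by (simp add: cA_def)

lemma cA_Suc: "cA (Suc n) = cA n * ((a + real n) * (b + real n)) / ((a + b + real n) * (real n + 1))"
proof -
  have "pochhammer (a+b) n > 0" using apos bpos by (intro pochhammer_pos) auto
  moreover have "a + b + n > 0" using apos bpos by simp
  ultimately show ?thesis
    unfolding cA_def pochhammer_Suc fact_Suc by (simp add: field_simps)
qed

lemma abs_summA: assumes "\<bar>x\<bar> < 1" shows "summable (\<lambda>n. norm (cA n * x^n))"
proof (rule summable_ratio_test[where c="\<bar>x\<bar>" and N="nat \<lceil>a*b\<rceil>"])
  show "\<bar>x\<bar> < 1" by fact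
  fix n assume n: "n \<ge> nat \<lceil>a*b\<rceil>"
  have "a*b \<le> real (nat \<lceil>a*b\<rceil>)" by (rule real_nat_ceiling_ge)
  also have "\<dots> \<le> real n" using n by simp
  finally have nab: "a*b \<le> real n" .
  have K: "(a+b+real n)*(real n+1) > 0" using apos bpos by auto
  have "(a+b+real n)*(real n+1) - (a+real n)*(b+real n) = a + b + real n - a*b"
    by (simp add: algebra_simps)
  then have "(a+real n)*(b+real n) \<le> (a+b+real n)*(real n+1)" using nab apos bpos by linarith
  then have R1: "(a+real n)*(b+real n) / ((a+b+real n)*(real n+1)) \<le> 1" using K by simp
  have R0: "(a+real n)*(b+real n) / ((a+b+real n)*(real n+1)) \<ge> 0" using K apos bpos by simp
  define R where "R = (a+real n)*(b+real n) / ((a+b+real n)*(real n+1))"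
  have cs: "cA (Suc n) = cA n * R" unfolding cA_Suc R_def by simp
  have "norm (norm (cA (Suc n) * x^Suc n)) = cA (Suc n) * (\<bar>x\<bar> * \<bar>x\<bar>^n)"
    using cA_pos[of "Suc n"] by (simp add: abs_mult power_abs)
  also have "\<dots> = ((a+real n)*(b+real n) / ((a+b+real n)*(real n+1))) * (\<bar>x\<bar> * (cA n * \<bar>x\<bar>^n))"
    unfolding cs R_def[symmetric] by (simp only: mult_ac)
  also have "\<dots> \<le> 1 * (\<bar>x\<bar> * (cA n * \<bar>x\<bar>^n))"
    using R1 cA_pos[of n] by (intro mult_right_mono) auto
  also have "\<dots> = \<bar>x\<bar> * norm (norm (cA n * x^n))"
    using cA_pos[of n] by (simp add: abs_mult power_abs)
  finally show "norm (norm (cA (Suc n) * x^Suc n)) \<le> \<bar>x\<bar> * norm (norm (cA n * x^n))" .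
qed

lemma summA: "\<bar>x\<bar> < 1 \<Longrightarrow> summable (\<lambda>n. cA n * x^n)"
  by (rule summable_norm_cancel, rule abs_summA)

definition cD :: "nat \<Rightarrow> real" where "cD = diffs cA"

lemma cD_eq: "cD n = cA n * ((a + n) * (b + n) / (a + b + n))"
proof -
  have "a + b + n > 0" using apos bpos by simp
  have gen: "(1+m) * (c * P / (Q * (m+1))) = c * (P / Q)" if "m + 1 \<noteq> 0" for m c P Q :: real
    using that by (simp add: divide_simps)
  show ?thesis unfolding cD_def diffs_def cA_Suc of_nat_Suc by (rule gen) simp
qed

lemma summD: "\<bar>x\<bar> < 1 \<Longrightarrow> summable (\<lambda>n. cD n * x^n)"
  unfolding cD_def by (rule termdiff_converges[of x 1]) (auto intro: summA)

definition cE :: "nat \<Rightarrow> real" where "cE n = cA n * (a * b / (a + b + n))"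

lemma summE: assumes "\<bar>x\<bar> < 1" shows "summable (\<lambda>n. cE n * x^n)"
proof (rule summable_comparison_test')
  show "summable (\<lambda>n. (a*b/(a+b)) * norm (cA n * x^n))"
    using abs_summA[OF assms] by (rule summable_mult)
  fix n
  have "a*b/(a+b+real n) \<le> a*b/(a+b)" using apos bpos by (auto intro!: divide_left_mono mult_pos_pos add_pos_nonneg)
  moreover have "a*b/(a+b+real n) \<ge> 0" using apos bpos by simp
  moreover have "norm (cE n * x^n) = (a*b/(a+b+real n)) * norm (cA n * x^n)"
    unfolding cE_def real_norm_def abs_mult using apos bpos by (simp add: abs_of_pos)
  ultimately show "norm (cE n * x^n) \<le> (a*b/(a+b)) * norm (cA n * x^n)"
    by (metis mult_right_mono norm_ge_zero)
qed

definition SA :: "real \<Rightarrow> real" where "SA x = (\<Sum>n. cA n * x^n)"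
definition SD :: "real \<Rightarrow> real" where "SD x = (\<Sum>n. cD n * x^n)"
definition SE :: "real \<Rightarrow> real" where "SE x = (\<Sum>n. cE n * x^n)"

lemma SA_deriv: "\<bar>x\<bar> < 1 \<Longrightarrow> (SA has_real_derivative SD x) (at x)"
  unfolding SA_def[abs_def] SD_def cD_def
  by (rule termdiffs_strong'[of 1]) (auto intro: summA)

lemma SA_pos: assumes "0 \<le> x" "x < 1" shows "SA x > 0"
  unfolding SA_def
proof (rule suminf_pos2[where i=0])
  show "summable (\<lambda>n. cA n * x^n)" using assms by (intro summA) auto
qed (use assms cA_pos in \<open>auto simp: cA_0 less_imp_le\<close>)

lemma SD_SE: assumes "\<bar>x\<bar> < 1" shows "(1 - x) * SD x = SE x"
proof -
  have sD: "summable (\<lambda>n. cD n * x^n)" using summD assms .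
  have sD': "summable (\<lambda>n. cD n * x^Suc n)"
    using summable_mult[OF sD, of x] by (simp add: mult_ac)
  have sE: "summable (\<lambda>n. cE n * x^n)" using summE assms .
  have cE_Suc: "cE (Suc n) = cD (Suc n) - cD n" for n
  proof -
    have K: "a + b + (real n + 1) > 0" using apos bpos by auto
    have e: "a * b / (a + b + (real n + 1)) = (a + (real n + 1)) * (b + (real n + 1)) / (a + b + (real n + 1)) - (real n + 1)"
      using K by (simp add: field_simps)
    have d: "cD n = cA (Suc n) * (real n + 1)" unfolding cD_def diffs_def by simp
    show ?thesis unfolding d unfolding cE_def cD_eq of_nat_Suc
      by (simp only: add.commute[of 1] e) (simp add: algebra_simps)
  qed
  have cE0: "cE 0 = cD 0" unfolding cE_def cD_eq by (simp add: cA_0)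
  have "SE x = cE 0 + (\<Sum>n. cE (Suc n) * x^Suc n)"
    unfolding SE_def using suminf_split_head[OF sE] by simp
  also have "(\<Sum>n. cE (Suc n) * x^Suc n) = (\<Sum>n. cD (Suc n) * x^Suc n) - (\<Sum>n. cD n * x^Suc n)"
    unfolding cE_Suc left_diff_distrib
    by (rule suminf_diff[symmetric]) (use summable_Suc_iff[THEN iffD2, OF sD] sD' in auto)
  also have "(\<Sum>n. cD (Suc n) * x^Suc n) = SD x - cD 0"
    unfolding SD_def using suminf_split_head[OF sD] by simp
  also have "(\<Sum>n. cD n * x^Suc n) = x * SD x"
    unfolding SD_def using suminf_mult[OF sD, of x] by (simp add: mult_ac)
  finally show ?thesis using cE0 by (simp add: algebra_simps)
qed


lemma alpha_mono:
  assumes "0 \<le> s" "s < t"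
  shows "(a+s)*(b+s)/(a+b+s) < (a+t)*(b+t)/(a+b+t)"
proof -
  have h1: "(a+t)*(b+t)*(a+b+s) - (a+s)*(b+s)*(a+b+t) = (t-s)*((a+b+s)*(a+b+t) - a*b)"
    by (simp add: algebra_simps)
  have "(a+b)*(a+b) \<le> (a+b+s)*(a+b+t)" using assms apos bpos by (intro mult_mono) auto
  moreover have "a*b < (a+b)*(a+b)" using apos bpos by (simp add: algebra_simps add_pos_pos)
  ultimately have "(t-s)*((a+b+s)*(a+b+t) - a*b) > 0" using assms by (intro mult_pos_pos) auto
  with h1 have "(a+s)*(b+s)*(a+b+t) < (a+t)*(b+t)*(a+b+s)" by simp
  moreover have "a+b+s > 0" "a+b+t > 0" using assms apos bpos by auto
  ultimately show ?thesis by (simp add: divide_simps)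
qed

lemma ratio1:
  assumes "0 < x" "x < y" "y < 1"
  shows "SD x / SA x < SD y / SA y"
proof -
  have mono: "cA m * cD n \<le> cA n * cD m" if "n < m" for n m
  proof -
    have "(a + real n) * (b + real n) / (a + b + real n) \<le> (a + real m) * (b + real m) / (a + b + real m)"
      using alpha_mono[of "real n" "real m"] that by simp
    moreover have "cA m * cD n = (cA m * cA n) * ((a + real n) * (b + real n) / (a + b + real n))"
      "cA n * cD m = (cA m * cA n) * ((a + real m) * (b + real m) / (a + b + real m))"
      unfolding cD_eq by (simp_all only: mult_ac)
    moreover have "cA m * cA n \<ge> 0" using cA_pos[of n] cA_pos[of m] by simp
    ultimately show ?thesis by (simp only:) (rule mult_left_mono)
  qed
  have al: "a*b/(a+b) < (a+1)*(b+1)/(a+b+1)" using alpha_mono[of 0 1] by simp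
  have "cA 1 * cD 0 = cA 1 * (a*b/(a+b))" "cA 0 * cD 1 = cA 1 * ((a+1)*(b+1)/(a+b+1))"
    unfolding cD_eq by (simp_all add: cA_0)
  then have "cA 1 * cD 0 < cA 0 * cD 1"
    using al cA_pos[of 1] by (simp only:) (rule mult_strict_left_mono)
  then have neg: "(cA 0 * cD 1 - cA 1 * cD 0) * (x - y) < 0" using assms by (simp add: mult_pos_neg)
  have ax: "\<bar>x\<bar> < 1" "\<bar>y\<bar> < 1" using assms by auto
  have "SA y * SD x - SA x * SD y \<le> (cA 0 * cD 1 - cA 1 * cD 0) * (x - y)"
    unfolding SA_def SD_def
    by (rule ratio_bound[OF summA[OF ax(1)] summA[OF ax(2)] summD[OF ax(1)] summD[OF ax(2)] assms(1,2) mono])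
  with neg have "SA y * SD x - SA x * SD y < 0" by linarith
  moreover have "SA x > 0" "SA y > 0" using assms SA_pos by auto
  ultimately show ?thesis by (simp add: divide_simps mult.commute)
qed

lemma ratio2:
  assumes "0 < x" "x < y" "y < 1"
  shows "SE y / SA y < SE x / SA x"
proof -
  have mono: "cE m * cA n \<le> cE n * cA m" if "n < m" for n m
  proof -
    have "a * b / (a + b + real m) \<le> a * b / (a + b + real n)"
      using that apos bpos by (auto intro!: divide_left_mono mult_pos_pos add_pos_nonneg)
    moreover have "cE m * cA n = (cA m * cA n) * (a * b / (a + b + real m))"
      "cE n * cA m = (cA m * cA n) * (a * b / (a + b + real n))"
      unfolding cE_def by (simp_all only: mult_ac)
    moreover have "cA m * cA n \<ge> 0" using cA_pos[of n] cA_pos[of m] by simp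
    ultimately show ?thesis by (simp only:) (rule mult_left_mono)
  qed
  have "a * b / (a + b + 1) < a * b / (a + b)"
    using apos bpos by (auto intro!: divide_strict_left_mono mult_pos_pos)
  moreover have "cE 1 * cA 0 = cA 1 * (a * b / (a + b + 1))" "cE 0 * cA 1 = cA 1 * (a * b / (a + b))"
    unfolding cE_def by (simp_all add: cA_0)
  ultimately have "cE 1 * cA 0 < cE 0 * cA 1"
    using cA_pos[of 1] by (simp only:) (rule mult_strict_left_mono)
  then have neg: "(cE 0 * cA 1 - cE 1 * cA 0) * (x - y) < 0" using assms by (simp add: mult_pos_neg)
  have ax: "\<bar>x\<bar> < 1" "\<bar>y\<bar> < 1" using assms by auto
  have "SE y * SA x - SE x * SA y \<le> (cE 0 * cA 1 - cE 1 * cA 0) * (x - y)"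
    unfolding SA_def SE_def
    by (rule ratio_bound[OF summE[OF ax(1)] summE[OF ax(2)] summA[OF ax(1)] summA[OF ax(2)] assms(1,2) mono])
  with neg have "SE y * SA x - SE x * SA y < 0" by linarith
  moreover have "SA x > 0" "SA y > 0" using assms SA_pos by auto
  ultimately show ?thesis by (simp add: divide_simps mult.commute)
qed

lemma SE_mono:
  assumes "0 \<le> x" "x < y" "y < 1"
  shows "SE x < SE y"
proof -
  have s: "summable (\<lambda>n. cE n * y^n)" "summable (\<lambda>n. cE n * x^n)" using assms summE by auto
  have "0 < (\<Sum>n. cE n * y^n - cE n * x^n)"
  proof (rule suminf_pos2[where i=1])
    show "summable (\<lambda>n. cE n * y^n - cE n * x^n)" using s by (rule summable_diff)
    fix n
    have "x^n \<le> y^n" using assms by (intro power_mono) auto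
    moreover have "cE n > 0" unfolding cE_def using cA_pos apos bpos by (auto intro!: mult_pos_pos divide_pos_pos add_pos_nonneg)
    ultimately show "0 \<le> cE n * y^n - cE n * x^n" by (simp add: mult_left_mono)
    have "cE 1 > 0" unfolding cE_def using cA_pos apos bpos by (auto intro!: mult_pos_pos divide_pos_pos add_pos_nonneg)
    then show "0 < cE 1 * y^1 - cE 1 * x^1" using assms by simp
  qed
  also have "\<dots> = SE y - SE x" unfolding SE_def using s by (rule suminf_diff[symmetric])
  finally show ?thesis by simp
qed


lemma xt: fixes t :: real assumes "0 < t" shows "0 < 1 - exp (-t)" "1 - exp (-t) < 1"
proof -
  have "exp (-t) < exp 0" using assms by (subst exp_less_cancel_iff) simp
  then show "0 < 1 - exp (-t)" by simp
  show "1 - exp (-t) < 1" by simp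
qed

lemma lnF_deriv: assumes "0 < x" "x < 1"
  shows "((\<lambda>x. ln (SA x)) has_real_derivative SD x / SA x) (at x)"
proof -
  have ax: "\<bar>x\<bar> < 1" using assms by auto
  have "((\<lambda>x. ln (SA x)) has_real_derivative 1 / SA x * SD x) (at x)"
    by (rule DERIV_chain2[OF DERIV_ln_divide[OF SA_pos] SA_deriv[OF ax]]) (use assms in auto)
  then show ?thesis by simp
qed

lemma g_deriv: assumes "0 < t"
  shows "((\<lambda>t. SA (1 - exp (-t))) has_real_derivative SE (1 - exp (-t))) (at t)"
proof -
  have ax: "\<bar>1 - exp (-t)\<bar> < 1" using xt[OF assms] by auto
  have d1: "((\<lambda>t. 1 - exp (-t)) has_real_derivative exp (-t)) (at t)"
    by (auto intro!: derivative_eq_intros)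
  have "((\<lambda>t. SA (1 - exp (-t))) has_real_derivative SD (1 - exp (-t)) * exp (-t)) (at t)"
    by (rule DERIV_chain2[OF SA_deriv[OF ax] d1])
  moreover have "SD (1 - exp (-t)) * exp (-t) = SE (1 - exp (-t))"
    using SD_SE[OF ax] by (simp add: mult.commute)
  ultimately show ?thesis by simp
qed

lemma h_deriv: assumes "0 < t"
  shows "((\<lambda>t. ln (SA (1 - exp (-t)))) has_real_derivative SE (1 - exp (-t)) / SA (1 - exp (-t))) (at t)"
proof -
  have "((\<lambda>t. ln (SA (1 - exp (-t)))) has_real_derivative 1 / SA (1 - exp (-t)) * SE (1 - exp (-t))) (at t)"
    by (rule DERIV_chain2[OF DERIV_ln_divide[OF SA_pos] g_deriv[OF assms]]) (use xt[OF assms] in auto)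
  then show ?thesis by simp
qed

lemma mh_deriv: assumes "0 < t"
  shows "((\<lambda>t. - ln (SA (1 - exp (-t)))) has_real_derivative - (SE (1 - exp (-t)) / SA (1 - exp (-t)))) (at t)"
  by (rule DERIV_minus[OF h_deriv[OF assms]])

lemma f1_mono: "0 < s \<Longrightarrow> s < t \<Longrightarrow> t < 1 \<Longrightarrow> SD s / SA s < SD t / SA t"
  by (rule ratio1)

lemma f2_mono: assumes "0 < s" "s < t"
  shows "- (SE (1 - exp (-s)) / SA (1 - exp (-s))) < - (SE (1 - exp (-t)) / SA (1 - exp (-t)))"
proof -
  have "SE (1 - exp (-t)) / SA (1 - exp (-t)) < SE (1 - exp (-s)) / SA (1 - exp (-s))"
    by (rule ratio2) (use assms xt[of s] xt[of t] in auto)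
  then show ?thesis by simp
qed

lemma f3_mono: assumes "0 < s" "s < t"
  shows "SE (1 - exp (-s)) < SE (1 - exp (-t))"
  by (rule SE_mono) (use assms xt[of s] xt[of t] in auto)

lemma part1: "convex_on {0<..<1} (\<lambda>x. ln (SA x))"
proof (rule convex_on_realI[where f'="\<lambda>x. SD x / SA x"])
  show "connected {0<..<1::real}" by simp
  fix x assume "x \<in> {0<..<1::real}"
  then show "((\<lambda>x. ln (SA x)) has_real_derivative SD x / SA x) (at x)" by (intro lnF_deriv) auto
next
  fix x y :: real assume "x \<in> {0<..<1}" "y \<in> {0<..<1}" "x \<le> y"
  then show "SD x / SA x \<le> SD y / SA y"
    using f1_mono[of x y] by (cases "x = y") auto
qed

lemma part2: "concave_on {0<..} (\<lambda>t. ln (SA (1 - exp (-t))))"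
  unfolding concave_on_def
proof (rule convex_on_realI[where f'="\<lambda>t. - (SE (1 - exp (-t)) / SA (1 - exp (-t)))"])
  show "connected {0::real<..}" by simp
  fix x :: real assume "x \<in> {0<..}"
  then show "((\<lambda>t. - ln (SA (1 - exp (-t)))) has_real_derivative - (SE (1 - exp (-x)) / SA (1 - exp (-x)))) (at x)"
    by (intro mh_deriv) auto
next
  fix x y :: real assume "x \<in> {0<..}" "y \<in> {0<..}" "x \<le> y"
  then show "- (SE (1 - exp (-x)) / SA (1 - exp (-x))) \<le> - (SE (1 - exp (-y)) / SA (1 - exp (-y)))"
    using f2_mono[of x y] by (cases "x = y") auto
qed

lemma part3: "convex_on {0<..} (\<lambda>t. SA (1 - exp (-t)))"
proof (rule convex_on_realI[where f'="\<lambda>t. SE (1 - exp (-t))"])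
  show "connected {0::real<..}" by simp
  fix x :: real assume "x \<in> {0<..}"
  then show "((\<lambda>t. SA (1 - exp (-t))) has_real_derivative SE (1 - exp (-x))) (at x)"
    by (intro g_deriv) auto
next
  fix x y :: real assume "x \<in> {0<..}" "y \<in> {0<..}" "x \<le> y"
  then show "SE (1 - exp (-x)) \<le> SE (1 - exp (-y))"
    using f3_mono[of x y] by (cases "x = y") auto
qed

lemma I1: assumes "0 < x" "x < y" "y < 1"
  shows "SA ((x + y) / 2) < sqrt (SA x * SA y)"
proof -
  have "2 * ln (SA ((x + y) / 2)) < ln (SA x) + ln (SA y)"
    by (rule strict_mid[where I="{0<..<1}" and f="\<lambda>x. ln (SA x)" and f'="\<lambda>x. SD x / SA x"])
       (use assms in \<open>auto intro: lnF_deriv f1_mono\<close>)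
  moreover have "SA x > 0" "SA y > 0" "SA ((x + y) / 2) > 0" using assms by (auto intro!: SA_pos)
  ultimately have "ln (SA ((x + y) / 2) ^ 2) < ln (SA x * SA y)"
    by (simp add: ln_mult ln_realpow)
  then have "SA ((x + y) / 2) ^ 2 < SA x * SA y"
    using \<open>SA x > 0\<close> \<open>SA y > 0\<close> \<open>SA ((x + y) / 2) > 0\<close> by (subst (asm) ln_less_cancel_iff) auto
  then show ?thesis by (rule real_less_rsqrt)
qed

lemma st_setup:
  assumes "0 < x" "x < y" "y < 1"
  defines "s \<equiv> - ln (1 - x)" and "t \<equiv> - ln (1 - y)"
  shows "0 < s" "s < t" "1 - exp (-s) = x" "1 - exp (-t) = y"
    "1 - exp (- ((s + t) / 2)) = 1 - sqrt ((1 - x) * (1 - y))"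
proof -
  show "0 < s" using assms by (simp add: s_def)
  show "s < t" using assms by (simp add: s_def t_def)
  have es: "exp (-s) = 1 - x" using assms by (simp add: s_def)
  have et: "exp (-t) = 1 - y" using assms by (simp add: t_def)
  show "1 - exp (-s) = x" "1 - exp (-t) = y" using es et by simp_all
  have "- ((s + t) / 2) + - ((s + t) / 2) = -s + -t" by simp
  then have "exp (- ((s + t) / 2)) * exp (- ((s + t) / 2)) = exp (-s) * exp (-t)"
    by (metis exp_add)
  then have "sqrt ((1 - x) * (1 - y)) = exp (- ((s + t) / 2))"
    using es et by (metis real_sqrt_abs2 exp_gt_zero abs_of_pos)
  then show "1 - exp (- ((s + t) / 2)) = 1 - sqrt ((1 - x) * (1 - y))" by simp
qed

lemma I2: assumes "0 < x" "x < y" "y < 1"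
  shows "sqrt (SA x * SA y) < SA (1 - sqrt ((1 - x) * (1 - y)))"
proof -
  define s where "s = - ln (1 - x)"
  define t where "t = - ln (1 - y)"
  note st = st_setup[OF assms, folded s_def t_def]
  define w where "w = 1 - sqrt ((1 - x) * (1 - y))"
  have "2 * (- ln (SA (1 - exp (- ((s + t) / 2))))) < (- ln (SA (1 - exp (-s)))) + (- ln (SA (1 - exp (-t))))"
  proof (rule strict_mid[where I="{0<..}" and f="\<lambda>t. - ln (SA (1 - exp (-t)))"
          and f'="\<lambda>t. - (SE (1 - exp (-t)) / SA (1 - exp (-t)))"])
    fix u :: real assume "u \<in> {0<..}"
    then show "((\<lambda>t. - ln (SA (1 - exp (-t)))) has_real_derivative - (SE (1 - exp (-u)) / SA (1 - exp (-u)))) (at u)"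
      by (intro mh_deriv) simp
  next
    fix u v :: real assume "u \<in> {0<..}" "v \<in> {0<..}" "u < v"
    then show "- (SE (1 - exp (-u)) / SA (1 - exp (-u))) < - (SE (1 - exp (-v)) / SA (1 - exp (-v)))"
      by (intro f2_mono) auto
  qed (use st in auto)
  then have lt: "ln (SA x) + ln (SA y) < 2 * ln (SA w)"
    unfolding st(3,4) st(5) w_def by simp
  have w01: "0 < w" "w < 1" using xt[of "(s + t) / 2"] st unfolding w_def by auto
  have "SA x > 0" "SA y > 0" "SA w > 0" using assms w01 by (auto intro!: SA_pos)
  then have "ln (SA x * SA y) < ln (SA w ^ 2)" using lt by (simp add: ln_mult ln_realpow)
  then have "SA x * SA y < SA w ^ 2"
    using \<open>SA x > 0\<close> \<open>SA y > 0\<close> \<open>SA w > 0\<close> by (subst (asm) ln_less_cancel_iff) auto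
  then have "sqrt (SA x * SA y) < sqrt (SA w ^ 2)" by (simp only: real_sqrt_less_iff)
  then show ?thesis using \<open>SA w > 0\<close> unfolding w_def by simp
qed

lemma I3: assumes "0 < x" "x < y" "y < 1"
  shows "SA (1 - sqrt ((1 - x) * (1 - y))) < (SA x + SA y) / 2"
proof -
  define s where "s = - ln (1 - x)"
  define t where "t = - ln (1 - y)"
  note st = st_setup[OF assms, folded s_def t_def]
  have "2 * SA (1 - exp (- ((s + t) / 2))) < SA (1 - exp (-s)) + SA (1 - exp (-t))"
  proof (rule strict_mid[where I="{0<..}" and f="\<lambda>t. SA (1 - exp (-t))"
          and f'="\<lambda>t. SE (1 - exp (-t))"])
    fix u :: real assume "u \<in> {0<..}"
    then show "((\<lambda>t. SA (1 - exp (-t))) has_real_derivative SE (1 - exp (-u))) (at u)"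
      by (intro g_deriv) simp
  next
    fix u v :: real assume "u \<in> {0<..}" "v \<in> {0<..}" "u < v"
    then show "SE (1 - exp (-u)) < SE (1 - exp (-v))"
      by (intro f3_mono) auto
  qed (use st in auto)
  then show ?thesis unfolding st(3,4) st(5) by simp
qed

lemma main_SA:
  shows "convex_on {0<..<1} (\<lambda>x. ln (SA x))
    \<and> concave_on {0<..} (\<lambda>t. ln (SA (1 - exp (- t))))
    \<and> convex_on {0<..} (\<lambda>t. SA (1 - exp (- t)))
    \<and> (\<forall>x\<in>{0<..<1}. \<forall>y\<in>{0<..<1}.
           SA ((x + y) / 2) \<le> sqrt (SA x * SA y)
         \<and> sqrt (SA x * SA y) \<le> SA (1 - sqrt ((1 - x) * (1 - y)))
         \<and> SA (1 - sqrt ((1 - x) * (1 - y))) \<le> (SA x + SA y) / 2)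
    \<and> (\<forall>x\<in>{0<..<1}. \<forall>y\<in>{0<..<1}.
           (SA ((x + y) / 2) = sqrt (SA x * SA y) \<longleftrightarrow> x = y)
         \<and> (sqrt (SA x * SA y) = SA (1 - sqrt ((1 - x) * (1 - y))) \<longleftrightarrow> x = y)
         \<and> (SA (1 - sqrt ((1 - x) * (1 - y))) = (SA x + SA y) / 2 \<longleftrightarrow> x = y))"
proof -
  have eq: "SA ((x + x) / 2) = sqrt (SA x * SA x)
         \<and> sqrt (SA x * SA x) = SA (1 - sqrt ((1 - x) * (1 - x)))
         \<and> SA (1 - sqrt ((1 - x) * (1 - x))) = (SA x + SA x) / 2" if "0 < x" "x < 1" for x
  proof -
    have "SA x > 0" using that by (intro SA_pos) auto
    moreover have "sqrt ((1 - x) * (1 - x)) = 1 - x" using that by simp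
    ultimately show ?thesis by simp
  qed
  have lt: "SA ((x + y) / 2) < sqrt (SA x * SA y)
         \<and> sqrt (SA x * SA y) < SA (1 - sqrt ((1 - x) * (1 - y)))
         \<and> SA (1 - sqrt ((1 - x) * (1 - y))) < (SA x + SA y) / 2"
    if "0 < x" "x < 1" "0 < y" "y < 1" "x \<noteq> y" for x y
  proof (cases "x < y")
    case True
    then show ?thesis using I1 I2 I3 that by blast
  next
    case False
    then have "y < x" using that by simp
    then have "SA ((y + x) / 2) < sqrt (SA y * SA x)
         \<and> sqrt (SA y * SA x) < SA (1 - sqrt ((1 - y) * (1 - x)))
         \<and> SA (1 - sqrt ((1 - y) * (1 - x))) < (SA y + SA x) / 2"
      using I1 I2 I3 that by blast
    then show ?thesis by (simp add: add.commute mult.commute)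
  qed
  show ?thesis
  proof (intro conjI ballI)
    show "convex_on {0<..<1} (\<lambda>x. ln (SA x))" by (rule part1)
    show "concave_on {0<..} (\<lambda>t. ln (SA (1 - exp (- t))))" by (rule part2)
    show "convex_on {0<..} (\<lambda>t. SA (1 - exp (- t)))" by (rule part3)
  next
    fix x y :: real assume x: "x \<in> {0<..<1}" and y: "y \<in> {0<..<1}"
    show "SA ((x + y) / 2) \<le> sqrt (SA x * SA y)"
      using eq[of x] lt[of x y] x y by (cases "x = y") auto
    show "sqrt (SA x * SA y) \<le> SA (1 - sqrt ((1 - x) * (1 - y)))"
      using eq[of x] lt[of x y] x y by (cases "x = y") auto
    show "SA (1 - sqrt ((1 - x) * (1 - y))) \<le> (SA x + SA y) / 2"
      using eq[of x] lt[of x y] x y by (cases "x = y") auto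
  next
    fix x y :: real assume x: "x \<in> {0<..<1}" and y: "y \<in> {0<..<1}"
    show "SA ((x + y) / 2) = sqrt (SA x * SA y) \<longleftrightarrow> x = y"
      using eq[of x] lt[of x y] x y by (cases "x = y") auto
    show "sqrt (SA x * SA y) = SA (1 - sqrt ((1 - x) * (1 - y))) \<longleftrightarrow> x = y"
      using eq[of x] lt[of x y] x y by (cases "x = y") auto
    show "SA (1 - sqrt ((1 - x) * (1 - y))) = (SA x + SA y) / 2 \<longleftrightarrow> x = y"
      using eq[of x] lt[of x y] x y by (cases "x = y") auto
  qed
qed

end

theorem theorem3p2:
  fixes a b c :: real
  assumes "a > 0" and "b > 0" and "c = a + b"
  defines "F \<equiv> hypergeom a b c"
  shows "convex_on {0<..<1} (\<lambda>x. ln (F x))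
    \<and> concave_on {0<..} (\<lambda>t. ln (F (1 - exp (- t))))
    \<and> convex_on {0<..} (\<lambda>t. F (1 - exp (- t)))
    \<and> (\<forall>x\<in>{0<..<1}. \<forall>y\<in>{0<..<1}.
           F ((x + y) / 2) \<le> sqrt (F x * F y)
         \<and> sqrt (F x * F y) \<le> F (1 - sqrt ((1 - x) * (1 - y)))
         \<and> F (1 - sqrt ((1 - x) * (1 - y))) \<le> (F x + F y) / 2)
    \<and> (\<forall>x\<in>{0<..<1}. \<forall>y\<in>{0<..<1}.
           (F ((x + y) / 2) = sqrt (F x * F y) \<longleftrightarrow> x = y)
         \<and> (sqrt (F x * F y) = F (1 - sqrt ((1 - x) * (1 - y))) \<longleftrightarrow> x = y)
         \<and> (F (1 - sqrt ((1 - x) * (1 - y))) = (F x + F y) / 2 \<longleftrightarrow> x = y))"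
  proof -
  have "F = SA a b" unfolding F_def assms(3)
    by (rule ext) (simp add: hypergeom_def SA_def[OF assms(1,2)] cA_def[OF assms(1,2)])
  then show ?thesis using main_SA[OF assms(1,2)] by simp
qed

end
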